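(* Let $R$ be a reduced root system and let $W$ be its Weyl group. Let $(t_1,\ldots,t_n)$ be an $n$-tuple of reflections in $W$ with $t_1t_2\cdots t_n=1$. Then $n$ is even and $(t_1,\ldots,t_n)$ is braid-equivalent to an $n$-tuple $(t'_1,\ldots,t'_n)$ of reflections with $t'_1\cdots t'_n=1$ and $t'_{2i-1}=t'_{2i}$ for $i=1,\ldots,n/2$.
   Context: For a group $G$, an elementary transformation (braid move) of an $n$-tuple $(t_1,\ldots,t_n)\in G^n$ is, for some $1\leq i\leq n-1$, either the replacement of $(t_i,t_{i+1})$ by $(t_it_{i+1}t_i^{-1},t_i)$ or by $(t_{i+1},t_{i+1}^{-1}t_it_{i+1})$, leaving the other entries unchanged. Two $n$-tuples are braid-equivalent if one is obtained from the other by a finite sequence of elementary transformations. *)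

theory Defs
  imports "HOL-Analysis.Analysis" "HOL-Algebra.Group"
begin

definition refl :: "'a::real_inner \<Rightarrow> 'a \<Rightarrow> 'a" where
  "refl \<alpha> = (\<lambda>v. v - (2 * (v \<bullet> \<alpha>) / (\<alpha> \<bullet> \<alpha>)) *\<^sub>R \<alpha>)"

definition root_system :: "'a::euclidean_space set \<Rightarrow> bool" where
  "root_system R \<longleftrightarrow> finite R \<and> 0 \<notin> R \<and> span R = UNIV \<and>
     (\<forall>\<alpha>\<in>R. refl \<alpha> ` R = R) \<and>
     (\<forall>\<alpha>\<in>R. \<forall>\<beta>\<in>R. 2 * (\<beta> \<bullet> \<alpha>) / (\<alpha> \<bullet> \<alpha>) \<in> \<int>)"

definition reduced :: "'a::euclidean_space set \<Rightarrow> bool" where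
  "reduced R \<longleftrightarrow> (\<forall>\<alpha>\<in>R. \<forall>c::real. c *\<^sub>R \<alpha> \<in> R \<longrightarrow> c = 1 \<or> c = -1)"

inductive_set weyl_carrier :: "'a::euclidean_space set \<Rightarrow> ('a \<Rightarrow> 'a) set" for R where
  id: "id \<in> weyl_carrier R"
| step: "\<alpha> \<in> R \<Longrightarrow> w \<in> weyl_carrier R \<Longrightarrow> refl \<alpha> \<circ> w \<in> weyl_carrier R"

definition weyl_group :: "'a::euclidean_space set \<Rightarrow> ('a \<Rightarrow> 'a) monoid" where
  "weyl_group R = \<lparr>carrier = weyl_carrier R, monoid.mult = (\<circ>), one = id\<rparr>"

definition reflections :: "'a::euclidean_space set \<Rightarrow> ('a \<Rightarrow> 'a) set" where
  "reflections R = refl ` R"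

definition list_prod :: "('g, 'b) monoid_scheme \<Rightarrow> 'g list \<Rightarrow> 'g" where
  "list_prod G ts = foldr (\<lambda>x y. x \<otimes>\<^bsub>G\<^esub> y) ts \<one>\<^bsub>G\<^esub>"

inductive braid_step :: "('g, 'b) monoid_scheme \<Rightarrow> 'g list \<Rightarrow> 'g list \<Rightarrow> bool" for G where
  left: "braid_step G (xs @ [a, b] @ ys) (xs @ [a \<otimes>\<^bsub>G\<^esub> b \<otimes>\<^bsub>G\<^esub> inv\<^bsub>G\<^esub> a, a] @ ys)"
| right: "braid_step G (xs @ [a, b] @ ys) (xs @ [b, inv\<^bsub>G\<^esub> b \<otimes>\<^bsub>G\<^esub> a \<otimes>\<^bsub>G\<^esub> b] @ ys)"

definition braid_equiv :: "('g, 'b) monoid_scheme \<Rightarrow> 'g list \<Rightarrow> 'g list \<Rightarrow> bool" where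
  "braid_equiv G = (braid_step G)\<^sup>*\<^sup>*"

end

theory Submission
  imports Defs "HOL-Library.FuncSet"
begin


lemma refl_refl: "refl a (refl a x) = x"
proof (cases "a = 0")
  case True then show ?thesis by (simp add: refl_def)
next
  case False
  then have "a \<bullet> a \<noteq> 0" by simp
  then show ?thesis by (simp add: refl_def inner_diff_left algebra_simps)
qed

lemma refl_comp_refl: "refl a \<circ> refl a = id"
  by (auto simp: refl_refl)

lemma refl_inner: "refl a x \<bullet> y = x \<bullet> refl a y"
  by (simp add: refl_def inner_diff_left inner_diff_right inner_commute algebra_simps)

lemma refl_inner_refl: "refl a x \<bullet> refl a y = x \<bullet> y"
  by (simp add: refl_inner refl_refl)

lemma refl_linear: "linear (refl a)"
  by (rule linearI) (simp_all add: refl_def inner_add_left algebra_simps scaleR_add_left add_divide_distrib)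

lemma refl_scale: "c \<noteq> 0 \<Longrightarrow> refl (c *\<^sub>R a) = refl a"
  by (rule ext) (simp add: refl_def)

lemma refl_conj: "refl a \<circ> refl b \<circ> refl a = refl (refl a b)"
proof (rule ext)
  fix x
  have "refl a (refl b (refl a x)) = refl a (refl a x - (2 * (refl a x \<bullet> b) / (b \<bullet> b)) *\<^sub>R b)"
    by (simp add: refl_def)
  also have "\<dots> = x - (2 * (refl a x \<bullet> b) / (b \<bullet> b)) *\<^sub>R refl a b"
    using refl_linear[of a] by (simp add: linear_diff linear_scale refl_refl)
  also have "\<dots> = refl (refl a b) x"
    unfolding refl_def[of "refl a b"] by (simp add: refl_inner refl_inner_refl refl_refl)
  finally show "(refl a \<circ> refl b \<circ> refl a) x = refl (refl a b) x" by simp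
qed

lemma refl_self: "refl a a = - a"
  by (cases "a = 0") (auto simp: refl_def algebra_simps scaleR_2)

lemma arith_contra:
  fixes X Y u w :: real
  assumes "X > 0" "Y > 0" "X + Y + u * Y \<le> 0" "X + Y + w * X \<le> 0" "u * w < 4"
  shows False
proof -
  have h1: "(-u) * Y \<ge> X + Y" using assms by linarith
  have h2: "(-w) * X \<ge> X + Y" using assms by linarith
  have "((-u) * Y) * ((-w) * X) \<ge> (X + Y) * (X + Y)"
    using h1 h2 assms by (intro mult_mono) auto
  moreover have "(X + Y) * (X + Y) \<ge> 4 * (X * Y)"
    using sum_squares_ge_zero[of "X - Y" 0] by (simp add: algebra_simps power2_eq_square)
  ultimately have "(u * w) * (X * Y) \<ge> 4 * (X * Y)" by (simp add: algebra_simps)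
  moreover have "X * Y > 0" using assms by simp
  ultimately have "u * w \<ge> 4" by (metis mult_le_cancel_right_pos)
  then show False using assms by simp
qed

lemma not_parallel:
  fixes a b :: "'a::real_inner"
  assumes "a \<noteq> 0" "b \<noteq> 0" "refl a \<noteq> refl b"
  shows "(a \<bullet> b)^2 < (a \<bullet> a) * (b \<bullet> b)"
proof -
  have le: "(a \<bullet> b)^2 \<le> (a \<bullet> a) * (b \<bullet> b)"
    by (metis Cauchy_Schwarz_ineq)
  have aa: "a \<bullet> a > 0" using assms by simp
  show ?thesis
  proof (rule ccontr)
    assume "\<not> ?thesis"
    then have eq: "(a \<bullet> b)^2 = (a \<bullet> a) * (b \<bullet> b)" using le by simp
    define c where "c = (a \<bullet> b) / (a \<bullet> a)"
    have "(b - c *\<^sub>R a) \<bullet> (b - c *\<^sub>R a) = b \<bullet> b - (a \<bullet> b)^2 / (a \<bullet> a)"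
      using aa by (simp add: c_def inner_diff_left inner_diff_right inner_commute power2_eq_square field_simps)
    also have "\<dots> = 0" using eq aa by (simp add: field_simps)
    finally have "b = c *\<^sub>R a" by simp
    moreover have "c \<noteq> 0" using \<open>b \<noteq> 0\<close> calculation by auto
    ultimately have "refl b = refl a" by (simp add: refl_scale)
    then show False using assms by simp
  qed
qed



lemma key:
  fixes a v \<alpha> \<beta> :: "'a::real_inner"
  assumes nz: "\<alpha> \<noteq> 0" "\<beta> \<noteq> 0" and ne: "refl \<alpha> \<noteq> refl \<beta>"
    and lt1: "refl \<beta> a \<bullet> v < a \<bullet> v" and lt2: "refl \<beta> a \<bullet> v < refl \<alpha> (refl \<beta> a) \<bullet> v"
  shows "refl \<beta> a \<bullet> v < refl \<alpha> a \<bullet> v \<or> refl \<beta> a \<bullet> v < refl \<beta> (refl \<alpha> (refl \<beta> a)) \<bullet> v"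
proof (rule ccontr)
  assume H: "\<not> ?thesis"
  define b where "b = refl \<beta> a"
  define c where "c = refl \<alpha> b"
  define p where "p = a \<bullet> \<beta>"
  define q where "q = b \<bullet> \<alpha>"
  define A where "A = 2 * (\<alpha> \<bullet> v) / (\<alpha> \<bullet> \<alpha>)"
  define B where "B = 2 * (\<beta> \<bullet> v) / (\<beta> \<bullet> \<beta>)"
  define k where "k = 2 * (\<alpha> \<bullet> \<beta>) / (\<beta> \<bullet> \<beta>)"
  define l where "l = 2 * (\<alpha> \<bullet> \<beta>) / (\<alpha> \<bullet> \<alpha>)"
  have aa: "\<alpha> \<bullet> \<alpha> > 0" and bb: "\<beta> \<bullet> \<beta> > 0" using nz by auto
  have hb: "b = a - (2 * p / (\<beta> \<bullet> \<beta>)) *\<^sub>R \<beta>" by (simp add: b_def p_def refl_def)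
  have hbv: "b \<bullet> v = a \<bullet> v - p * B"
    by (simp add: hb B_def inner_diff_left)
  have hc: "c = b - (2 * q / (\<alpha> \<bullet> \<alpha>)) *\<^sub>R \<alpha>" by (simp add: c_def q_def refl_def)
  have hcv: "c \<bullet> v = b \<bullet> v - q * A"
    by (simp add: hc A_def inner_diff_left)
  have haa: "a \<bullet> \<alpha> = q + p * k"
  proof -
    have "a = b + (2 * p / (\<beta> \<bullet> \<beta>)) *\<^sub>R \<beta>" using hb by simp
    then have "a \<bullet> \<alpha> = b \<bullet> \<alpha> + (2 * p / (\<beta> \<bullet> \<beta>)) * (\<beta> \<bullet> \<alpha>)"
      by (simp add: inner_add_left)
    then show ?thesis by (simp add: q_def k_def inner_commute)
  qed
  have hE1: "refl \<alpha> a \<bullet> v = a \<bullet> v - (a \<bullet> \<alpha>) * A"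
    by (simp add: refl_def A_def inner_diff_left)
  have hbb: "b \<bullet> \<beta> = - p"
    using bb by (simp add: hb inner_diff_left p_def)
  have hcb: "c \<bullet> \<beta> = - p - q * l"
    using hbb by (simp add: hc l_def inner_diff_left)
  have hE2: "refl \<beta> c \<bullet> v = c \<bullet> v - (c \<bullet> \<beta>) * B"
    by (simp add: refl_def B_def inner_diff_left)
  define X where "X = p * B"
  define Y where "Y = - q * A"
  have X: "X > 0" using lt1 hbv by (simp add: b_def X_def)
  have Y: "Y > 0" using lt2 hcv by (simp add: b_def[symmetric] c_def[symmetric] Y_def)
  have p0: "p \<noteq> 0" using X by (auto simp: X_def)
  have q0: "q \<noteq> 0" using Y by (auto simp: Y_def)
  have E1: "refl \<alpha> a \<bullet> v \<le> b \<bullet> v" using H by (simp add: b_def)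
  have E2: "refl \<beta> c \<bullet> v \<le> b \<bullet> v" using H by (simp add: b_def c_def)
  define u where "u = p * k / q"
  define w where "w = q * l / p"
  have e1: "X + Y + u * Y \<le> 0"
  proof -
    have "u * Y = - p * k * A" using q0 by (simp add: u_def Y_def)
    then have "X + Y + u * Y = p * B - q * A - p * k * A" by (simp add: X_def Y_def)
    moreover have "refl \<alpha> a \<bullet> v = a \<bullet> v - q * A - p * k * A" using hE1 haa by (simp add: algebra_simps)
    ultimately show ?thesis using E1 hbv by linarith
  qed
  have e2: "X + Y + w * X \<le> 0"
  proof -
    have "w * X = q * l * B" using p0 by (simp add: w_def X_def)
    then have "X + Y + w * X = p * B - q * A + q * l * B" by (simp add: X_def Y_def)
    moreover have "refl \<beta> c \<bullet> v = c \<bullet> v + p * B + q * l * B" using hE2 hcb by (simp add: algebra_simps)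
    ultimately show ?thesis using E2 hcv by linarith
  qed
  have "u * w = k * l" using p0 q0 by (simp add: u_def w_def)
  also have "\<dots> = 4 * (\<alpha> \<bullet> \<beta>)^2 / ((\<alpha> \<bullet> \<alpha>) * (\<beta> \<bullet> \<beta>))"
    by (simp add: k_def l_def power2_eq_square)
  also have "\<dots> < 4"
    using not_parallel[OF nz ne] aa bb by (simp add: divide_less_eq)
  finally show False using arith_contra[OF X Y e1 e2] by simp
qed



lemma refl_in_W: "\<alpha> \<in> R \<Longrightarrow> refl \<alpha> \<in> weyl_carrier R"
  using weyl_carrier.step[OF _ weyl_carrier.id, of \<alpha> R] by simp

lemma W_linear: "w \<in> weyl_carrier R \<Longrightarrow> linear w"
proof (induction rule: weyl_carrier.induct)
  case id then show ?case by (rule linearI) auto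
next
  case (step \<alpha> w) show ?case by (rule linear_compose[OF step(3) refl_linear])
qed

lemma W_R: assumes rs: "root_system R" shows "w \<in> weyl_carrier R \<Longrightarrow> w ` R \<subseteq> R"
proof (induction rule: weyl_carrier.induct)
  case id then show ?case by simp
next
  case (step \<alpha> w)
  then have "refl \<alpha> ` R = R" using rs by (simp add: root_system_def)
  then show ?case using step by (auto simp: image_comp[symmetric])
qed

lemma W_finite:
  assumes rs: "root_system R"
  shows "finite (weyl_carrier R)"
proof -
  have fin: "finite R" using rs by (simp add: root_system_def)
  have sp: "span R = UNIV" using rs by (simp add: root_system_def)
  have inj: "inj_on (\<lambda>w. restrict w R) (weyl_carrier R)"
  proof (rule inj_onI)
    fix w w' assume w: "w \<in> weyl_carrier R" and w': "w' \<in> weyl_carrier R"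
      and eq: "restrict w R = restrict w' R"
    show "w = w'"
    proof (rule ext)
      fix x
      have "x \<in> span R" using sp by simp
      moreover have "\<And>b. b \<in> R \<Longrightarrow> w b = w' b"
        using eq by (metis restrict_apply')
      ultimately show "w x = w' x"
        using real_vector.linear_eq_on[OF W_linear[OF w] W_linear[OF w']] by blast
    qed
  qed
  have Wx: "\<And>w x. w \<in> weyl_carrier R \<Longrightarrow> x \<in> R \<Longrightarrow> w x \<in> R"
    using W_R[OF rs] by blast
  have "(\<lambda>w. restrict w R) ` weyl_carrier R \<subseteq> R \<rightarrow>\<^sub>E R"
    using Wx by auto
  moreover have "finite (R \<rightarrow>\<^sub>E R)" using fin by (intro finite_PiE) auto
  ultimately have "finite ((\<lambda>w. restrict w R) ` weyl_carrier R)" by (rule finite_subset)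
  then show ?thesis using inj by (rule finite_imageD)
qed

lemma W_inner: "w \<in> weyl_carrier R \<Longrightarrow> w x \<bullet> w y = x \<bullet> y"
  by (induction arbitrary: x y rule: weyl_carrier.induct) (auto simp: refl_inner_refl)

lemma W_regular:
  assumes rs: "root_system R" and reg: "\<forall>\<alpha>\<in>R. v \<bullet> \<alpha> \<noteq> 0"
  shows "w \<in> weyl_carrier R \<Longrightarrow> \<forall>\<alpha>\<in>R. w v \<bullet> \<alpha> \<noteq> 0"
proof (induction rule: weyl_carrier.induct)
  case id then show ?case using reg by simp
next
  case (step \<beta> w)
  show ?case
  proof
    fix \<alpha> assume a: "\<alpha> \<in> R"
    have "refl \<beta> \<alpha> \<in> R" using rs step(1) a by (auto simp: root_system_def)
    then show "(refl \<beta> \<circ> w) v \<bullet> \<alpha> \<noteq> 0" using step(3) by (simp add: refl_inner)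
  qed
qed

lemma prodl_W: "set ts \<subseteq> reflections R \<Longrightarrow> foldr (\<circ>) ts id \<in> weyl_carrier R"
  by (induction ts) (auto simp: reflections_def intro: weyl_carrier.step weyl_carrier.id)

lemma list_prod_W: "list_prod (weyl_group R) ts = foldr (\<circ>) ts id"
  by (simp add: list_prod_def weyl_group_def)

lemma one_W: "\<one>\<^bsub>weyl_group R\<^esub> = id"
  by (simp add: weyl_group_def)

lemma mult_W: "x \<otimes>\<^bsub>weyl_group R\<^esub> y = x \<circ> y"
  by (simp add: weyl_group_def)

lemma inv_W: "\<alpha> \<in> R \<Longrightarrow> inv\<^bsub>weyl_group R\<^esub> (refl \<alpha>) = refl \<alpha>"
  unfolding m_inv_def
proof (rule the_equality)
  assume "\<alpha> \<in> R"
  then show "refl \<alpha> \<in> carrier (weyl_group R) \<and> refl \<alpha> \<otimes>\<^bsub>weyl_group R\<^esub> refl \<alpha> = \<one>\<^bsub>weyl_group R\<^esub>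
     \<and> refl \<alpha> \<otimes>\<^bsub>weyl_group R\<^esub> refl \<alpha> = \<one>\<^bsub>weyl_group R\<^esub>"
    by (simp add: weyl_group_def refl_in_W refl_comp_refl)
next
  fix y assume "y \<in> carrier (weyl_group R) \<and> refl \<alpha> \<otimes>\<^bsub>weyl_group R\<^esub> y = \<one>\<^bsub>weyl_group R\<^esub>
     \<and> y \<otimes>\<^bsub>weyl_group R\<^esub> refl \<alpha> = \<one>\<^bsub>weyl_group R\<^esub>"
  then have "y \<circ> refl \<alpha> = id" by (simp add: weyl_group_def)
  then have "y \<circ> refl \<alpha> \<circ> refl \<alpha> = refl \<alpha>" by simp
  then show "y = refl \<alpha>" by (simp add: comp_assoc refl_comp_refl)
qed

lemma inv_T: "t \<in> reflections R \<Longrightarrow> inv\<^bsub>weyl_group R\<^esub> t = t"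
  by (auto simp: reflections_def inv_W)

lemma T_invol: "t \<in> reflections R \<Longrightarrow> t \<circ> t = id"
  by (auto simp: reflections_def refl_comp_refl)

lemma T_invol': "t \<in> reflections R \<Longrightarrow> t (t x) = x"
  by (auto simp: reflections_def refl_refl)

lemma T_conj: assumes rs: "root_system R" and "a \<in> reflections R" "b \<in> reflections R"
  shows "a \<circ> b \<circ> a \<in> reflections R"
proof -
  obtain x y where x: "x \<in> R" "a = refl x" and y: "y \<in> R" "b = refl y"
    using assms by (auto simp: reflections_def)
  have "refl x y \<in> R" using rs x y by (auto simp: root_system_def)
  then show ?thesis using x y by (auto simp: reflections_def refl_conj)
qed

lemma bs_left: "a \<in> reflections R \<Longrightarrow>
  braid_step (weyl_group R) (pre @ [a, b] @ suf) (pre @ [a \<circ> b \<circ> a, a] @ suf)"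
  using braid_step.left[of "weyl_group R" pre a b suf] by (simp add: inv_T mult_W)

lemma bs_right: "b \<in> reflections R \<Longrightarrow>
  braid_step (weyl_group R) (pre @ [a, b] @ suf) (pre @ [b, b \<circ> a \<circ> b] @ suf)"
  using braid_step.right[of "weyl_group R" pre a b suf] by (simp add: inv_T mult_W)

lemma bs_T:
  assumes "braid_step (weyl_group R) xs ys" "set xs \<subseteq> reflections R"
  shows "\<exists>pre a b suf. xs = pre @ [a, b] @ suf \<and> a \<in> reflections R \<and> b \<in> reflections R \<and>
     (ys = pre @ [a \<circ> b \<circ> a, a] @ suf \<or> ys = pre @ [b, b \<circ> a \<circ> b] @ suf)"
  using assms
proof (cases rule: braid_step.cases)
  case (left pre a b suf)
  then show ?thesis using assms(2) by (auto simp: inv_T mult_W)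
next
  case (right pre a b suf)
  then show ?thesis using assms(2) by (auto simp: inv_T mult_W)
qed

lemma foldr_comp_append: "foldr (\<circ>) (xs @ ys) id = foldr (\<circ>) xs id \<circ> foldr (\<circ>) ys id"
  by (induction xs) auto

lemma foldr_pt: "foldr (\<circ>) (pre @ ys) id z = foldr (\<circ>) pre id (foldr (\<circ>) ys id z)"
  by (induction pre arbitrary: z) auto

lemma bs_good:
  assumes rs: "root_system R" and "braid_step (weyl_group R) xs ys" "set xs \<subseteq> reflections R"
  shows "set ys \<subseteq> reflections R \<and> foldr (\<circ>) ys id = foldr (\<circ>) xs id \<and> length ys = length xs"
proof -
  obtain pre a b suf where xs: "xs = pre @ [a, b] @ suf" and a: "a \<in> reflections R"
    and b: "b \<in> reflections R"
    and ys: "ys = pre @ [a \<circ> b \<circ> a, a] @ suf \<or> ys = pre @ [b, b \<circ> a \<circ> b] @ suf"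
    using bs_T[OF assms(2,3)] by blast
  have P: "\<And>x y z. foldr (\<circ>) (pre @ x # y # suf) id z = foldr (\<circ>) pre id (x (y (foldr (\<circ>) suf id z)))"
    unfolding foldr_pt by simp
  have "foldr (\<circ>) ys id = foldr (\<circ>) xs id"
    using ys unfolding xs by (auto simp del: foldr_append simp add: fun_eq_iff P T_invol'[OF a] T_invol'[OF b])
  then show ?thesis using ys xs assms(3) T_conj[OF rs a b] T_conj[OF rs b a]
    by auto
qed

lemma be_good:
  assumes rs: "root_system R" and "braid_equiv (weyl_group R) xs ys" "set xs \<subseteq> reflections R"
  shows "set ys \<subseteq> reflections R \<and> foldr (\<circ>) ys id = foldr (\<circ>) xs id \<and> length ys = length xs"
  using assms(2,3) unfolding braid_equiv_def
proof (induction rule: rtranclp_induct)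
  case base then show ?case by simp
next
  case (step y z)
  have "set y \<subseteq> reflections R \<and> foldr (\<circ>) y id = foldr (\<circ>) xs id \<and> length y = length xs"
    using step by blast
  with bs_good[OF rs step(2)] show ?case by metis
qed

lemma bs_lift: "braid_step G zs zs' \<Longrightarrow> braid_step G (xs @ zs) (xs @ zs')"
proof (induction rule: braid_step.induct)
  case (left pre a b suf)
  then show ?case using braid_step.left[of G "xs @ pre" a b suf] by simp
next
  case (right pre a b suf)
  then show ?case using braid_step.right[of G "xs @ pre" a b suf] by simp
qed

lemma be_lift: "braid_equiv G zs zs' \<Longrightarrow> braid_equiv G (xs @ zs) (xs @ zs')"
  unfolding braid_equiv_def
proof (induction rule: rtranclp_induct)
  case base then show ?case by simp
next
  case (step y z)
  then show ?case using bs_lift[OF step(2), of xs] by (simp add: rtranclp.rtrancl_into_rtrancl)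
qed

lemma pair_front:
  assumes t: "t \<in> reflections R"
  shows "braid_equiv (weyl_group R) (xs @ [t, t] @ ys) ([t, t] @ xs @ ys)"
proof (induction xs arbitrary: ys rule: rev_induct)
  case Nil then show ?case by (simp add: braid_equiv_def)
next
  case (snoc x xs)
  have s1: "braid_step (weyl_group R) (xs @ [x, t] @ (t # ys)) (xs @ [t, t \<circ> x \<circ> t] @ (t # ys))"
    by (rule bs_right[OF t])
  have s2: "braid_step (weyl_group R) ((xs @ [t]) @ [t \<circ> x \<circ> t, t] @ ys)
      ((xs @ [t]) @ [t, t \<circ> (t \<circ> x \<circ> t) \<circ> t] @ ys)"
    by (rule bs_right[OF t])
  have tt: "t \<circ> (t \<circ> x \<circ> t) \<circ> t = x" using t
    by (auto simp: fun_eq_iff T_invol')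
  have "braid_equiv (weyl_group R) ((xs @ [x]) @ [t, t] @ ys) (xs @ [t, t] @ (x # ys))"
    using s1 s2 tt unfolding braid_equiv_def by auto
  moreover have "braid_equiv (weyl_group R) (xs @ [t, t] @ (x # ys)) ([t, t] @ xs @ (x # ys))"
    by (rule snoc.IH)
  ultimately show ?case unfolding braid_equiv_def by (simp add: rtranclp_trans)
qed



lemma exists_regular:
  fixes S :: "'a::real_inner set"
  assumes "finite S" "0 \<notin> S"
  shows "\<exists>v. \<forall>\<alpha>\<in>S. v \<bullet> \<alpha> \<noteq> 0"
  using assms
proof (induction S rule: finite_induct)
  case empty then show ?case by simp
next
  case (insert \<alpha> S)
  obtain v where v: "\<forall>\<beta>\<in>S. v \<bullet> \<beta> \<noteq> 0" using insert by auto
  have a0: "\<alpha> \<noteq> 0" using insert by auto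
  define B where "B = (\<lambda>\<beta>. - (v \<bullet> \<beta>) / (\<alpha> \<bullet> \<beta>)) ` (insert \<alpha> S)"
  have "finite B" using insert by (simp add: B_def)
  then obtain e :: real where e: "e \<notin> B" using ex_new_if_finite[OF infinite_UNIV_char_0] by blast
  define v' where "v' = v + e *\<^sub>R \<alpha>"
  have "\<forall>\<beta>\<in>insert \<alpha> S. v' \<bullet> \<beta> \<noteq> 0"
  proof
    fix \<beta> assume b: "\<beta> \<in> insert \<alpha> S"
    have eq: "v' \<bullet> \<beta> = v \<bullet> \<beta> + e * (\<alpha> \<bullet> \<beta>)" by (simp add: v'_def inner_add_left)
    show "v' \<bullet> \<beta> \<noteq> 0"
    proof (cases "\<alpha> \<bullet> \<beta> = 0")
      case True
      then have "\<beta> \<noteq> \<alpha>" using a0 by auto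
      then have "\<beta> \<in> S" using b by auto
      then show ?thesis using eq True v by simp
    next
      case False
      show ?thesis
      proof
        assume "v' \<bullet> \<beta> = 0"
        then have "e = - (v \<bullet> \<beta>) / (\<alpha> \<bullet> \<beta>)" using eq False by (simp add: field_simps)
        then have "e \<in> B" using b by (auto simp: B_def)
        then show False using e by simp
      qed
    qed
  qed
  then show ?case by blast
qed

definition pt :: "'a \<Rightarrow> ('a \<Rightarrow> 'a) list \<Rightarrow> nat \<Rightarrow> 'a" where
  "pt v us j = foldr (\<circ>) (drop j us) id v"

definition mu :: "'a::real_inner \<Rightarrow> ('a \<Rightarrow> 'a) list \<Rightarrow> real" where
  "mu v us = (\<Sum>j<length us. pt v us j \<bullet> v)"

lemma pt_step: "j < length us \<Longrightarrow> pt v us j = (us ! j) (pt v us (Suc j))"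
  by (simp add: pt_def Cons_nth_drop_Suc[symmetric])

lemma pt_0: "foldr (\<circ>) us id = id \<Longrightarrow> pt v us 0 = v"
  by (simp add: pt_def)

lemma pt_len: "pt v us (length us) = v"
  by (simp add: pt_def)

lemma pt_W: "set us \<subseteq> reflections R \<Longrightarrow> foldr (\<circ>) (drop j us) id \<in> weyl_carrier R"
  by (rule prodl_W) (meson order_trans set_drop_subset)

lemma pt_swap:
  assumes "x' \<circ> y' = x \<circ> y" "j \<noteq> Suc (length xs)"
  shows "pt v (xs @ [x', y'] @ ys) j = pt v (xs @ [x, y] @ ys) j"
proof (cases "j \<le> length xs")
  case True
  have h: "x' (y' z) = x (y z)" for z using fun_cong[OF assms(1), of z] by simp
  have e: "x' \<circ> (y' \<circ> r) = x \<circ> (y \<circ> r)" for r by (simp add: fun_eq_iff h)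
  show ?thesis using True by (simp add: pt_def e)
next
  case False
  define k where "k = j - length xs - 2"
  have jk: "j = length xs + 2 + k" using False assms(2) by (simp add: k_def)
  show ?thesis unfolding jk by (simp add: pt_def)
qed

lemma pt_mid: "pt v (xs @ [x, y] @ ys) (Suc (length xs)) = y (foldr (\<circ>) ys id v)"
  by (simp add: pt_def)

lemma mu_swap:
  assumes "x' \<circ> y' = x \<circ> y"
  shows "mu v (xs @ [x', y'] @ ys) = mu v (xs @ [x, y] @ ys) - y (foldr (\<circ>) ys id v) \<bullet> v
     + y' (foldr (\<circ>) ys id v) \<bullet> v"
proof -
  let ?L = "xs @ [x, y] @ ys" and ?L' = "xs @ [x', y'] @ ys"
  let ?i = "Suc (length xs)"
  have len: "length ?L' = length ?L" by simp
  have i: "?i \<in> {..<length ?L}" by simp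
  have "mu v ?L = pt v ?L ?i \<bullet> v + (\<Sum>j\<in>{..<length ?L} - {?i}. pt v ?L j \<bullet> v)"
    unfolding mu_def by (rule sum.remove[OF _ i]) simp
  moreover have "mu v ?L' = pt v ?L' ?i \<bullet> v + (\<Sum>j\<in>{..<length ?L} - {?i}. pt v ?L' j \<bullet> v)"
    unfolding mu_def len by (rule sum.remove[OF _ i]) simp
  moreover have "(\<Sum>j\<in>{..<length ?L} - {?i}. pt v ?L' j \<bullet> v) = (\<Sum>j\<in>{..<length ?L} - {?i}. pt v ?L j \<bullet> v)"
  proof (rule sum.cong[OF refl])
    fix j assume "j \<in> {..<length ?L} - {?i}"
    then have ne: "j \<noteq> ?i" by simp
    show "pt v ?L' j \<bullet> v = pt v ?L j \<bullet> v" using pt_swap[OF assms ne] by simp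
  qed
  ultimately show ?thesis by (simp only: pt_mid)
qed

lemma decomp2: "Suc k < length us \<Longrightarrow> us = take k us @ [us ! k, us ! Suc k] @ drop (Suc (Suc k)) us"
proof -
  assume a: "Suc k < length us"
  have "drop k us = us ! k # us ! Suc k # drop (Suc (Suc k)) us"
    using a by (simp add: Cons_nth_drop_Suc)
  then show ?thesis by (metis append_Cons append_Nil append_take_drop_id)
qed



lemma improve:
  assumes rs: "root_system R" and reg: "\<forall>\<alpha>\<in>R. v \<bullet> \<alpha> \<noteq> 0"
    and T: "set us \<subseteq> reflections R" and P: "foldr (\<circ>) us id = id" and n2: "2 \<le> length us"
    and nopair: "\<forall>i. Suc i < length us \<longrightarrow> us ! i \<noteq> us ! Suc i"
  shows "\<exists>us1. braid_step (weyl_group R) us us1 \<and> set us1 \<subseteq> reflections R \<and>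
     foldr (\<circ>) us1 id = id \<and> length us1 = length us \<and> mu v us < mu v us1"
proof -
  define n where "n = length us"
  define F where "F j = pt v us j \<bullet> v" for j
  have R0: "0 \<notin> R" using rs by (simp add: root_system_def)
  have inW: "foldr (\<circ>) (drop j us) id \<in> weyl_carrier R" for j using pt_W[OF T] .
  have reg_pt: "\<forall>\<alpha>\<in>R. pt v us j \<bullet> \<alpha> \<noteq> 0" for j
    using W_regular[OF rs reg inW[of j]] by (simp add: pt_def)
  have top: "F j \<le> v \<bullet> v" for j
  proof -
    have "pt v us j \<bullet> pt v us j = v \<bullet> v" using W_inner[OF inW[of j]] by (simp add: pt_def)
    then have "norm (pt v us j) = norm v" by (simp add: norm_eq_sqrt_inner)
    then show ?thesis using norm_cauchy_schwarz[of "pt v us j" v]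
      by (simp add: F_def power2_norm_eq_inner[symmetric] power2_eq_square)
  qed
  have Tn: "us ! j \<in> reflections R" if "j < n" for j using T that by (auto simp: n_def)
  have neqF: "F j \<noteq> F (Suc j)" if j: "j < n" for j
  proof -
    obtain \<alpha> where a: "\<alpha> \<in> R" "us ! j = refl \<alpha>" using Tn[OF j] by (auto simp: reflections_def)
    define p where "p = pt v us (Suc j)"
    have "F j = p \<bullet> v - (2 * (p \<bullet> \<alpha>) / (\<alpha> \<bullet> \<alpha>)) * (\<alpha> \<bullet> v)"
      using pt_step[of j us v] j a by (simp add: F_def n_def p_def refl_def inner_diff_left)
    moreover have "p \<bullet> \<alpha> \<noteq> 0" using reg_pt a by (simp add: p_def)
    moreover have "\<alpha> \<bullet> v \<noteq> 0" using reg a by (simp add: inner_commute)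
    moreover have "\<alpha> \<noteq> 0" using a R0 by auto
    ultimately show ?thesis by (simp add: F_def p_def)
  qed
  define I where "I = {1..<n}"
  have I: "finite I" "I \<noteq> {}" using n2 by (auto simp: I_def n_def)
  have "Min (F ` I) \<in> F ` I" using I by (intro Min_in) auto
  then obtain i where i: "i \<in> I" "F i = Min (F ` I)" by (metis imageE)
  have imin: "F i \<le> F j" if "j \<in> I" for j using i I that by simp
  have i1: "1 \<le> i" "i < n" using i by (auto simp: I_def)
  have left: "F i < F (i - 1)"
  proof -
    have "F i \<le> F (i - 1)"
    proof (cases "i - 1 = 0")
      case True
      then have "F (i - 1) = v \<bullet> v" using pt_0[OF P] by (simp add: F_def)
      then show ?thesis using top by simp
    next
      case False
      then have "i - 1 \<in> I" using i1 unfolding I_def atLeastLessThan_iff by linarith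
      then show ?thesis using imin by blast
    qed
    moreover have "F (i - 1) \<noteq> F i" using neqF[of "i - 1"] i1 by simp
    ultimately show ?thesis by simp
  qed
  have right: "F i < F (Suc i)"
  proof -
    have "F i \<le> F (Suc i)"
    proof (cases "Suc i = n")
      case True
      then have "F (Suc i) = v \<bullet> v" using pt_len[of v us] by (simp add: F_def n_def)
      then show ?thesis using top by simp
    next
      case False then show ?thesis using imin i1 by (simp add: I_def)
    qed
    moreover have "F i \<noteq> F (Suc i)" using neqF[of i] i1 by simp
    ultimately show ?thesis by simp
  qed
  define x where "x = us ! (i - 1)"
  define y where "y = us ! i"
  have xT: "x \<in> reflections R" and yT: "y \<in> reflections R" using Tn i1 by (auto simp: x_def y_def)
  obtain \<alpha> \<beta> where ab: "\<alpha> \<in> R" "\<beta> \<in> R" "x = refl \<alpha>" "y = refl \<beta>"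
    using xT yT by (auto simp: reflections_def)
  have xy: "x \<noteq> y" using nopair[rule_format, of "i - 1"] i1 by (simp add: x_def y_def n_def)
  define a where "a = pt v us (Suc i)"
  have b: "pt v us i = y a" using pt_step[of i us v] i1 by (simp add: a_def y_def n_def)
  have c: "pt v us (i - 1) = x (y a)" using pt_step[of "i - 1" us v] i1 b by (simp add: x_def n_def)
  have lt1: "refl \<beta> a \<bullet> v < a \<bullet> v" using right b ab by (simp add: F_def a_def)
  have lt2: "refl \<beta> a \<bullet> v < refl \<alpha> (refl \<beta> a) \<bullet> v" using left b c ab by (simp add: F_def)
  have nz: "\<alpha> \<noteq> 0" "\<beta> \<noteq> 0" using ab R0 by auto
  have K: "refl \<beta> a \<bullet> v < refl \<alpha> a \<bullet> v \<or> refl \<beta> a \<bullet> v < refl \<beta> (refl \<alpha> (refl \<beta> a)) \<bullet> v"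
    by (rule key[OF nz _ lt1 lt2]) (use xy ab in simp)
  define xs where "xs = take (i - 1) us"
  define ys where "ys = drop (Suc i) us"
  have us: "us = xs @ [x, y] @ ys"
    using decomp2[of "i - 1" us] i1 by (simp add: xs_def ys_def x_def y_def n_def)
  have lxs: "Suc (length xs) = i" using i1 by (simp add: xs_def n_def)
  have ya: "foldr (\<circ>) ys id v = a" by (simp add: a_def ys_def pt_def)
  have muus: "mu v us = mu v (xs @ [x, y] @ ys)" using us by simp
  have ptb: "y (foldr (\<circ>) ys id v) \<bullet> v = refl \<beta> a \<bullet> v" using ya ab by simp
  show ?thesis
  proof (cases "refl \<beta> a \<bullet> v < refl \<alpha> a \<bullet> v")
    case True
    define us1 where "us1 = xs @ [x \<circ> y \<circ> x, x] @ ys"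
    have st: "braid_step (weyl_group R) us us1" unfolding us us1_def by (rule bs_left[OF xT])
    have comp: "(x \<circ> y \<circ> x) \<circ> x = x \<circ> y" using xT by (auto simp: fun_eq_iff T_invol')
    have "mu v us1 = mu v us - refl \<beta> a \<bullet> v + refl \<alpha> a \<bullet> v"
      unfolding us1_def muus mu_swap[OF comp] ptb using ya ab by simp
    then have "mu v us < mu v us1" using True by simp
    then show ?thesis using st bs_good[OF rs st T] P by auto
  next
    case False
    then have K2: "refl \<beta> a \<bullet> v < refl \<beta> (refl \<alpha> (refl \<beta> a)) \<bullet> v" using K by simp
    define us1 where "us1 = xs @ [y, y \<circ> x \<circ> y] @ ys"
    have st: "braid_step (weyl_group R) us us1" unfolding us us1_def by (rule bs_right[OF yT])
    have comp: "y \<circ> (y \<circ> x \<circ> y) = x \<circ> y" using yT by (auto simp: fun_eq_iff T_invol')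
    have "mu v us1 = mu v us - refl \<beta> a \<bullet> v + refl \<beta> (refl \<alpha> (refl \<beta> a)) \<bullet> v"
      unfolding us1_def muus mu_swap[OF comp] ptb using ya ab by simp
    then have "mu v us < mu v us1" using K2 by simp
    then show ?thesis using st bs_good[OF rs st T] P by auto
  qed
qed



lemma reach:
  assumes rs: "root_system R" and reg: "\<forall>\<alpha>\<in>R. v \<bullet> \<alpha> \<noteq> 0"
  shows "set us \<subseteq> reflections R \<Longrightarrow> foldr (\<circ>) us id = id \<Longrightarrow> length us = n \<Longrightarrow> 1 \<le> n \<Longrightarrow>
    \<exists>us'. braid_equiv (weyl_group R) us us' \<and> set us' \<subseteq> reflections R \<and>
      foldr (\<circ>) us' id = id \<and> length us' = n \<and> (\<exists>i. Suc i < n \<and> us' ! i = us' ! Suc i)"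
proof -
  define Orb where "Orb = (\<lambda>w. w v) ` weyl_carrier R"
  define S where "S = (\<lambda>f. \<Sum>j<n. f j \<bullet> v) ` ({..<n} \<rightarrow>\<^sub>E Orb)"
  have finO: "finite Orb" using W_finite[OF rs] by (simp add: Orb_def)
  have finS: "finite S" unfolding S_def using finO by (intro finite_imageI finite_PiE) auto
  have inS: "mu v us \<in> S" if "set us \<subseteq> reflections R" "length us = n" for us
  proof -
    have "restrict (pt v us) {..<n} \<in> {..<n} \<rightarrow>\<^sub>E Orb"
      using pt_W[OF that(1)] by (auto simp: Orb_def pt_def)
    moreover have "mu v us = (\<Sum>j<n. restrict (pt v us) {..<n} j \<bullet> v)"
      unfolding mu_def that(2) by (rule sum.cong) auto
    ultimately show ?thesis unfolding S_def by blast
  qed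
  have main: "\<And>us. card {y \<in> S. mu v us < y} = k \<Longrightarrow> set us \<subseteq> reflections R \<Longrightarrow>
    foldr (\<circ>) us id = id \<Longrightarrow> length us = n \<Longrightarrow> 1 \<le> n \<Longrightarrow>
    \<exists>us'. braid_equiv (weyl_group R) us us' \<and> set us' \<subseteq> reflections R \<and>
      foldr (\<circ>) us' id = id \<and> length us' = n \<and> (\<exists>i. Suc i < n \<and> us' ! i = us' ! Suc i)" for k
  proof (induction k rule: less_induct)
    case (less k us)
    show ?case
    proof (cases "\<exists>i. Suc i < n \<and> us ! i = us ! Suc i")
      case True
      then show ?thesis using less.prems by (auto simp: braid_equiv_def)
    next
      case False
      have "n \<noteq> 1"
      proof
        assume "n = 1"
        then obtain t where t: "us = [t]" using less.prems(4)
          by (metis One_nat_def length_0_conv length_Suc_conv)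
        then obtain \<alpha> where a: "\<alpha> \<in> R" "t = refl \<alpha>" using less.prems(2) by (auto simp: reflections_def)
        have "foldr (\<circ>) [t] id = t" by simp
        then have "t = id" using less.prems(3) t by metis
        then have "refl \<alpha> \<alpha> = \<alpha>" using a by simp
        then have h: "- \<alpha> = \<alpha>" by (simp add: refl_self)
        have "\<alpha> + \<alpha> = 0" by (metis h add.right_inverse)
        then have "(2::real) *\<^sub>R \<alpha> = 0" by (simp add: scaleR_2)
        then have "\<alpha> = 0" by simp
        then show False using a rs by (simp add: root_system_def)
      qed
      then have n2: "2 \<le> length us" using less.prems by simp
      obtain us1 where us1: "braid_step (weyl_group R) us us1" "set us1 \<subseteq> reflections R"
        "foldr (\<circ>) us1 id = id" "length us1 = length us" "mu v us < mu v us1"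
        using improve[OF rs reg less.prems(2,3) n2] False less.prems(4) by blast
      have sub: "{y \<in> S. mu v us1 < y} \<subset> {y \<in> S. mu v us < y}"
        using us1(5) inS[OF us1(2)] us1(4) less.prems(4) by auto
      have "card {y \<in> S. mu v us1 < y} < k"
        using psubset_card_mono[OF _ sub] finS less.prems(1) by simp
      then obtain us' where us': "braid_equiv (weyl_group R) us1 us'" "set us' \<subseteq> reflections R"
        "foldr (\<circ>) us' id = id" "length us' = n" "\<exists>i. Suc i < n \<and> us' ! i = us' ! Suc i"
        using less.IH[OF _ refl us1(2,3)] us1(4) less.prems(4,5) by metis
      have "braid_equiv (weyl_group R) us us'"
        using us1(1) us'(1) unfolding braid_equiv_def by (rule converse_rtranclp_into_rtranclp)
      then show ?thesis using us' by blast
    qed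
  qed
  show "set us \<subseteq> reflections R \<Longrightarrow> foldr (\<circ>) us id = id \<Longrightarrow> length us = n \<Longrightarrow> 1 \<le> n \<Longrightarrow> ?thesis"
    using main by blast
qed

lemma main_ind:
  assumes rs: "root_system R" and reg: "\<forall>\<alpha>\<in>R. v \<bullet> \<alpha> \<noteq> 0"
  shows "set ts \<subseteq> reflections R \<Longrightarrow> foldr (\<circ>) ts id = id \<Longrightarrow> even (length ts) \<and>
    (\<exists>ts'. braid_equiv (weyl_group R) ts ts' \<and> length ts' = length ts \<and>
       set ts' \<subseteq> reflections R \<and> foldr (\<circ>) ts' id = id \<and>
       (\<forall>i < length ts div 2. ts' ! (2 * i) = ts' ! (2 * i + 1)))"
proof (induction "length ts" arbitrary: ts rule: less_induct)
  case (less ts)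
  show ?case
  proof (cases "ts = []")
    case True
    then show ?thesis by (auto simp: braid_equiv_def)
  next
    case False
    define n where "n = length ts"
    have n1: "1 \<le> n" using False by (simp add: n_def Suc_le_eq)
    obtain us i where us: "braid_equiv (weyl_group R) ts us" "set us \<subseteq> reflections R"
      "foldr (\<circ>) us id = id" "length us = n" and i: "Suc i < n" "us ! i = us ! Suc i"
      using reach[OF rs reg less.prems n_def[symmetric] n1] by blast
    define t where "t = us ! i"
    define xs where "xs = take i us"
    define ys where "ys = drop (Suc (Suc i)) us"
    have usd: "us = xs @ [t, t] @ ys" using decomp2[of i us] i us(4)
      by (simp add: t_def xs_def ys_def)
    have tT: "t \<in> reflections R" using us(2) i us(4) by (auto simp: t_def)
    define zs where "zs = xs @ ys"
    have be1: "braid_equiv (weyl_group R) us ([t, t] @ zs)"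
      using pair_front[OF tT, of xs ys] usd by (simp add: zs_def)
    have g: "set ([t, t] @ zs) \<subseteq> reflections R \<and> foldr (\<circ>) ([t, t] @ zs) id = foldr (\<circ>) us id
       \<and> length ([t, t] @ zs) = length us"
      by (rule be_good[OF rs be1 us(2)])
    have zT: "set zs \<subseteq> reflections R" using g by simp
    have zP: "foldr (\<circ>) zs id = id"
    proof -
      have "t \<circ> (t \<circ> foldr (\<circ>) zs id) = id" using g us(3) by simp
      then show ?thesis using tT by (simp add: fun_eq_iff T_invol')
    qed
    have zl: "length zs + 2 = n" using g us(4) by simp
    have "length zs < length ts" using zl by (simp add: n_def)
    then obtain zs' where ev: "even (length zs)" and zs': "braid_equiv (weyl_group R) zs zs'"
      "length zs' = length zs" "set zs' \<subseteq> reflections R" "foldr (\<circ>) zs' id = id"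
      "\<forall>i < length zs div 2. zs' ! (2 * i) = zs' ! (2 * i + 1)"
      using less.hyps[OF _ zT zP] by blast
    define ts' where "ts' = [t, t] @ zs'"
    have "braid_equiv (weyl_group R) ts ts'"
    proof -
      have "braid_equiv (weyl_group R) ([t, t] @ zs) ts'"
        unfolding ts'_def by (rule be_lift[OF zs'(1)])
      then show ?thesis using us(1) be1 unfolding braid_equiv_def by (meson rtranclp_trans)
    qed
    moreover have "length ts' = length ts" using zl zs'(2) by (simp add: ts'_def n_def)
    moreover have "set ts' \<subseteq> reflections R" using tT zs'(3) by (simp add: ts'_def)
    moreover have "foldr (\<circ>) ts' id = id" using zs'(4) tT by (simp add: ts'_def fun_eq_iff T_invol')
    moreover have "\<forall>j < length ts div 2. ts' ! (2 * j) = ts' ! (2 * j + 1)"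
    proof (intro allI impI)
      fix j assume j: "j < length ts div 2"
      show "ts' ! (2 * j) = ts' ! (2 * j + 1)"
      proof (cases j)
        case 0 then show ?thesis by (simp add: ts'_def)
      next
        case (Suc k)
        then have "k < length zs div 2" using j zl by (simp add: n_def)
        then show ?thesis using zs'(5) Suc by (simp add: ts'_def)
      qed
    qed
    moreover have "even (length ts)"
    proof -
      have "length ts = length zs + 2" using zl by (simp add: n_def)
      then show ?thesis using ev by simp
    qed
    ultimately show ?thesis by blast
  qed
qed


theorem proposition2p3:
  fixes R :: "'a::euclidean_space set" and ts :: "('a \<Rightarrow> 'a) list"
  assumes "root_system R" and "reduced R"
    and "set ts \<subseteq> reflections R"
    and "list_prod (weyl_group R) ts = \<one>\<^bsub>weyl_group R\<^esub>"
  shows "even (length ts) \<and>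
    (\<exists>ts'. braid_equiv (weyl_group R) ts ts' \<and> length ts' = length ts \<and>
       set ts' \<subseteq> reflections R \<and>
       list_prod (weyl_group R) ts' = \<one>\<^bsub>weyl_group R\<^esub> \<and>
       (\<forall>i < length ts div 2. ts' ! (2 * i) = ts' ! (2 * i + 1)))"
proof -
  have fin: "finite R" and R0: "0 \<notin> R" using assms(1) by (auto simp: root_system_def)
  obtain v :: 'a where reg: "\<forall>\<alpha>\<in>R. v \<bullet> \<alpha> \<noteq> 0" using exists_regular[OF fin R0] by blast
  have P: "foldr (\<circ>) ts id = id" using assms(4) by (simp add: list_prod_W one_W)
  show ?thesis using main_ind[OF assms(1) reg assms(3) P] by (simp add: list_prod_W one_W)
qed

end
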